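(* Let $Y\in\mathbb{C}^{(n\times n)\cdot d}$, let $f$ be an NC function uniformly analytic in a uniformly open neighbourhood of $Y$, with Taylor–Taylor coefficients $\hat f_{\alpha,\beta;\omega}$ at $Y$ as in the context, and for $1\le a,b\le n$ let $f_{a,b}$ be the formal power series in $dn^2$ non-commuting variables $\{\mathfrak{z}_{i,j,k}:1\le i,j\le n,1\le k\le d\}$, $$f_{a,b}=\sum_{\ell\ge0}\ \sum_{\substack{\alpha=a_0\cdots a_{\ell-1},\ \beta=b_0\cdots b_{\ell-1}\in\mathbb{F}^+_n\\ \omega=w_1\cdots w_\ell\in\mathbb{F}^+_d}}\hat f_{\alpha a,\beta b;\omega}\ \mathfrak{z}_{a_0,b_0,w_1}\mathfrak{z}_{a_1,b_1,w_2}\cdots\mathfrak{z}_{a_{\ell-1},b_{\ell-1},w_\ell}.$$ Then for every $1\le a,b\le n$ the radius of convergence $R_{a,b}$ of $f_{a,b}$ at $0$ is positive.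
   Context: $\mathbb{C}^{(k\times k)\cdot d}$ denotes column $d$-tuples of $k\times k$ matrices with $\|X\|_{\mathrm{col}}$ the operator norm of the stacked matrix; the uniform topology is generated by the sets $\bigsqcup_m\{X\in\mathbb{C}^{(mk\times mk)\cdot d}:\|X-I_m\otimes Z\|_{\mathrm{col}}<r\}$. An NC function is a map on a direct-sum-closed set that is graded, respects direct sums and joint similarities; it is uniformly analytic if its domain is uniformly open and it is locally bounded in the uniform topology. Such $f$ has a Taylor–Taylor expansion at $Y$: unique $|\omega|$-linear maps $f_\omega:(\mathbb{C}^{n\times n})^{|\omega|}\to\mathbb{C}^{n\times n}$ ($\omega\in\mathbb{F}^+_d$, the free monoid on $\{1,\dots,d\}$) with $f(X)=\sum_\omega f_\omega\circ(X-I_m\otimes Y)^{\odot\omega}$ near $Y$ (blockwise application to Haagerup products of $m\times m$ block matrices). Each $f_\omega$ with $|\omega|=\ell$ is written uniquely as $f_\omega(G_1,\dots,G_\ell)=\sum\hat f_{\alpha,\beta;\omega}E_{a_0,b_0}G_1E_{a_1,b_1}\cdots G_\ell E_{a_\ell,b_\ell}$, summing over $\alpha=a_0\cdots a_\ell,\beta=b_0\cdots b_\ell\in\mathbb{F}^+_n$, with $E_{i,j}$ the matrix units. The radius of convergence at $0$ of a formal power series $g=\sum_\nu\hat g_\nu\mathfrak{z}^\nu$ in $N$ non-commuting variables is $R_g$ with $1/R_g=\limsup_{\ell\to\infty}\big(\sum_{|\nu|=\ell}|\hat g_\nu|^2\big)^{1/(2\ell)}$. *)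

theory Defs
  imports "HOL-Analysis.Analysis"
begin

text \<open>Indices are 0-based. A (square) matrix of size s is a function
  nat => nat => complex whose entries outside {..<s} x {..<s} are ignored or zero.
  A d-tuple of s x s matrices is a function nat => nat => nat => complex, X k i j
  being entry (i,j) of the k-th matrix. A point of the nc universe is a pair (s, X)
  (level s). Free-monoid words are lists.\<close>

type_synonym cmat = "nat \<Rightarrow> nat \<Rightarrow> complex"
type_synonym ctup = "nat \<Rightarrow> nat \<Rightarrow> nat \<Rightarrow> complex"

definition wf_tup :: "nat \<Rightarrow> nat \<Rightarrow> ctup \<Rightarrow> bool" where
  "wf_tup d s X \<longleftrightarrow> (\<forall>k i j. (d \<le> k \<or> s \<le> i \<or> s \<le> j) \<longrightarrow> X k i j = 0)"

definition wf_mat :: "nat \<Rightarrow> cmat \<Rightarrow> bool" where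
  "wf_mat s A \<longleftrightarrow> (\<forall>i j. (s \<le> i \<or> s \<le> j) \<longrightarrow> A i j = 0)"

definition mprod :: "nat \<Rightarrow> cmat \<Rightarrow> cmat \<Rightarrow> cmat" where
  "mprod s A B = (\<lambda>i j. if i < s \<and> j < s then (\<Sum>l<s. A i l * B l j) else 0)"

definition idm :: "nat \<Rightarrow> cmat" where
  "idm s = (\<lambda>i j. if i < s \<and> i = j then 1 else 0)"

definition unitm :: "nat \<Rightarrow> nat \<Rightarrow> cmat" where
  "unitm a b = (\<lambda>i j. if i = a \<and> j = b then 1 else 0)"

text \<open>Operator norm of an s x s matrix and column norm of a d-tuple
  (operator norm of the stacked (d s) x s matrix).\<close>
definition op_norm :: "nat \<Rightarrow> cmat \<Rightarrow> real" where
  "op_norm s A = Sup {sqrt (\<Sum>i<s. (cmod (\<Sum>j<s. A i j * v j))\<^sup>2) | v.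
                      (\<Sum>j<s. (cmod (v j))\<^sup>2) \<le> 1}"

definition col_norm :: "nat \<Rightarrow> nat \<Rightarrow> ctup \<Rightarrow> real" where
  "col_norm d s X = Sup {sqrt (\<Sum>k<d. \<Sum>i<s. (cmod (\<Sum>j<s. X k i j * v j))\<^sup>2) | v.
                      (\<Sum>j<s. (cmod (v j))\<^sup>2) \<le> 1}"

text \<open>I_m \<otimes> Z for Z of level t.\<close>
definition kron_id :: "nat \<Rightarrow> nat \<Rightarrow> nat \<Rightarrow> ctup \<Rightarrow> ctup" where
  "kron_id d m t Z = (\<lambda>k i j. if k < d \<and> i < m * t \<and> j < m * t \<and> i div t = j div t
                                then Z k (i mod t) (j mod t) else 0)"

definition tup_diff :: "ctup \<Rightarrow> ctup \<Rightarrow> ctup" where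
  "tup_diff X Z = (\<lambda>k i j. X k i j - Z k i j)"

definition uball :: "nat \<Rightarrow> nat \<Rightarrow> ctup \<Rightarrow> real \<Rightarrow> (nat \<times> ctup) set" where
  "uball d t Z r = {(s, X). \<exists>m\<ge>1. s = m * t \<and> wf_tup d s X \<and>
                       col_norm d s (tup_diff X (kron_id d m t Z)) < r}"

definition uniform_top :: "nat \<Rightarrow> (nat \<times> ctup) topology" where
  "uniform_top d = topology_generated_by
      {uball d t Z r | t Z r. 1 \<le> t \<and> wf_tup d t Z \<and> 0 < r}"

definition tup_dsum :: "nat \<Rightarrow> ctup \<Rightarrow> ctup \<Rightarrow> ctup" where
  "tup_dsum s X X' = (\<lambda>k i j. if i < s \<and> j < s then X k i j
                               else if s \<le> i \<and> s \<le> j then X' k (i - s) (j - s) else 0)"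

definition mat_dsum :: "nat \<Rightarrow> cmat \<Rightarrow> cmat \<Rightarrow> cmat" where
  "mat_dsum s A A' = (\<lambda>i j. if i < s \<and> j < s then A i j
                               else if s \<le> i \<and> s \<le> j then A' (i - s) (j - s) else 0)"

definition tup_sim :: "nat \<Rightarrow> nat \<Rightarrow> cmat \<Rightarrow> ctup \<Rightarrow> cmat \<Rightarrow> ctup" where
  "tup_sim d s S X T = (\<lambda>k. if k < d then mprod s (mprod s S (X k)) T else (\<lambda>i j. 0))"

text \<open>NC function on Omega (direct-sum closed, graded, respects direct sums and
  joint similarities). Matrix identities are required on the relevant index range.\<close>
definition nc_function :: "nat \<Rightarrow> (nat \<times> ctup) set \<Rightarrow> (nat \<Rightarrow> ctup \<Rightarrow> cmat) \<Rightarrow> bool" where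
  "nc_function d \<Omega> f \<longleftrightarrow>
     (\<forall>s X t X'. (s, X) \<in> \<Omega> \<longrightarrow> (t, X') \<in> \<Omega> \<longrightarrow> (s + t, tup_dsum s X X') \<in> \<Omega>) \<and>
     (\<forall>s X t X'. (s, X) \<in> \<Omega> \<longrightarrow> (t, X') \<in> \<Omega> \<longrightarrow>
        (\<forall>i<s+t. \<forall>j<s+t. f (s + t) (tup_dsum s X X') i j = mat_dsum s (f s X) (f t X') i j)) \<and>
     (\<forall>s X S T. (s, X) \<in> \<Omega> \<longrightarrow> wf_mat s S \<longrightarrow> wf_mat s T \<longrightarrow>
        mprod s S T = idm s \<longrightarrow> mprod s T S = idm s \<longrightarrow> (s, tup_sim d s S X T) \<in> \<Omega> \<longrightarrow>
        (\<forall>i<s. \<forall>j<s. f s (tup_sim d s S X T) i j = mprod s (mprod s S (f s X)) T i j))"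

definition uniformly_open :: "nat \<Rightarrow> (nat \<times> ctup) set \<Rightarrow> bool" where
  "uniformly_open d \<Omega> \<longleftrightarrow> openin (uniform_top d) \<Omega>"

definition uniformly_analytic :: "nat \<Rightarrow> (nat \<times> ctup) set \<Rightarrow> (nat \<Rightarrow> ctup \<Rightarrow> cmat) \<Rightarrow> bool" where
  "uniformly_analytic d \<Omega> f \<longleftrightarrow> nc_function d \<Omega> f \<and> uniformly_open d \<Omega> \<and>
     (\<forall>p\<in>\<Omega>. \<exists>U B. openin (uniform_top d) U \<and> p \<in> U \<and>
        (\<forall>s X. (s, X) \<in> U \<inter> \<Omega> \<longrightarrow> op_norm s (f s X) \<le> B))"

definition words :: "nat \<Rightarrow> nat \<Rightarrow> nat list set" where
  "words N l = {xs. length xs = l \<and> set xs \<subseteq> {..<N}}"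

text \<open>E_{a0,b0} G_1 E_{a1,b1} ... G_l E_{al,bl} (n x n matrices).\<close>
fun emon :: "nat \<Rightarrow> nat list \<Rightarrow> nat list \<Rightarrow> cmat list \<Rightarrow> cmat" where
  "emon n (a # \<alpha>) (b # \<beta>) Gs = (case Gs of [] \<Rightarrow> unitm a b
      | G # Gs' \<Rightarrow> mprod n (mprod n (unitm a b) G) (emon n \<alpha> \<beta> Gs'))"
| "emon n _ _ _ = (\<lambda>i j. 0)"

text \<open>The multilinear map f_omega determined by the coefficients fhat(alpha,beta,omega).\<close>
definition coeff_map :: "nat \<Rightarrow> (nat list \<Rightarrow> nat list \<Rightarrow> nat list \<Rightarrow> complex) \<Rightarrow> nat list
                          \<Rightarrow> cmat list \<Rightarrow> cmat" where
  "coeff_map n fhat \<omega> Gs = (\<lambda>i j. \<Sum>\<alpha>\<in>words n (length Gs + 1). \<Sum>\<beta>\<in>words n (length Gs + 1).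
        fhat \<alpha> \<beta> \<omega> * emon n \<alpha> \<beta> Gs i j)"

definition blk :: "nat \<Rightarrow> ctup \<Rightarrow> nat \<Rightarrow> nat \<Rightarrow> nat \<Rightarrow> cmat" where
  "blk n H k p q = (\<lambda>i j. if i < n \<and> j < n then H k (p * n + i) (q * n + j) else 0)"

text \<open>Degree-l part of the Taylor--Taylor series at Y (level n), evaluated at X of
  level m n, entry (P,Q): the sum over |omega| = l of f_omega applied blockwise to the
  Haagerup product (X - I_m \<otimes> Y)^{\<odot> omega}.\<close>
definition tt_term :: "nat \<Rightarrow> nat \<Rightarrow> (nat list \<Rightarrow> nat list \<Rightarrow> nat list \<Rightarrow> complex) \<Rightarrow> ctup
                        \<Rightarrow> nat \<Rightarrow> ctup \<Rightarrow> nat \<Rightarrow> nat \<Rightarrow> nat \<Rightarrow> complex" where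
  "tt_term d n fhat Y m X l P Q =
     (let H = tup_diff X (kron_id d m n Y) in
      \<Sum>\<omega>\<in>words d l. \<Sum>ps\<in>{ps\<in>words m (l + 1). ps ! 0 = P div n \<and> ps ! l = Q div n}.
        coeff_map n fhat \<omega> (map (\<lambda>t. blk n H (\<omega> ! t) (ps ! t) (ps ! (t + 1))) [0..<l])
          (P mod n) (Q mod n))"

definition fps_radius :: "'v set \<Rightarrow> ('v list \<Rightarrow> complex) \<Rightarrow> ereal" where
  "fps_radius V g = inverse (limsup (\<lambda>l. ereal
      ((\<Sum>\<nu>\<in>{\<nu>. length \<nu> = l \<and> set \<nu> \<subseteq> V}. (cmod (g \<nu>))\<^sup>2) powr (1 / (2 * real l)))))"

text \<open>The series f_{a,b} in the variables z_{i,j,k} (triples (i,j,k)).\<close>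
definition fab :: "(nat list \<Rightarrow> nat list \<Rightarrow> nat list \<Rightarrow> complex) \<Rightarrow> nat \<Rightarrow> nat
                     \<Rightarrow> (nat \<times> nat \<times> nat) list \<Rightarrow> complex" where
  "fab fhat a b \<nu> = fhat (map fst \<nu> @ [a]) (map (fst \<circ> snd) \<nu> @ [b]) (map (snd \<circ> snd) \<nu>)"

end

theory Submission
  imports Defs
begin


definition msq :: "nat \<Rightarrow> nat \<Rightarrow> ctup \<Rightarrow> (nat \<Rightarrow> complex) \<Rightarrow> real" where
  "msq d s A v = (\<Sum>k<d. \<Sum>i<s. (cmod (\<Sum>j<s. A k i j * v j))\<^sup>2)"
definition vsq :: "nat \<Rightarrow> (nat \<Rightarrow> complex) \<Rightarrow> real" where
  "vsq s v = (\<Sum>j<s. (cmod (v j))\<^sup>2)"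

lemma col_norm_alt: "col_norm d s A = Sup {sqrt (msq d s A v) | v. vsq s v \<le> 1}"
  unfolding col_norm_def msq_def vsq_def ..

lemma msq_nonneg: "0 \<le> msq d s A v" unfolding msq_def by (intro sum_nonneg) auto
lemma vsq_nonneg: "0 \<le> vsq s v" unfolding vsq_def by (intro sum_nonneg) auto

lemma vsq_le1_entry: assumes "vsq s v \<le> 1" "j < s" shows "cmod (v j) \<le> 1"
proof -
  have "(cmod (v j))\<^sup>2 \<le> vsq s v" unfolding vsq_def
    using assms(2) by (intro member_le_sum) auto
  then have "(cmod (v j))\<^sup>2 \<le> 1" using assms by linarith
  then show ?thesis by (simp add: power_le_one_iff abs_le_square_iff[symmetric]) 
qed

lemma col_norm_bdd: "bdd_above {sqrt (msq d s A v) | v. vsq s v \<le> 1}"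
proof -
  let ?M = "(\<Sum>k<d. \<Sum>i<s. (\<Sum>j<s. cmod (A k i j))\<^sup>2)"
  have "sqrt (msq d s A v) \<le> sqrt ?M" if "vsq s v \<le> 1" for v
  proof -
    have "cmod (\<Sum>j<s. A k i j * v j) \<le> (\<Sum>j<s. cmod (A k i j))" for k i
    proof -
      have "cmod (\<Sum>j<s. A k i j * v j) \<le> (\<Sum>j<s. cmod (A k i j * v j))" by (rule norm_sum)
      also have "\<dots> \<le> (\<Sum>j<s. cmod (A k i j))"
        using vsq_le1_entry[OF that] by (intro sum_mono) (auto simp: norm_mult intro: mult_left_le)
      finally show ?thesis .
    qed
    then have "msq d s A v \<le> ?M" unfolding msq_def
      by (intro sum_mono power_mono) auto
    then show ?thesis by simp
  qed
  then show ?thesis by (intro bdd_aboveI[where M="sqrt ?M"]) blast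
qed

lemma col_norm_upper: "vsq s v \<le> 1 \<Longrightarrow> sqrt (msq d s A v) \<le> col_norm d s A"
  unfolding col_norm_alt by (rule cSup_upper[OF _ col_norm_bdd]) auto

lemma col_norm_least: "(\<And>v. vsq s v \<le> 1 \<Longrightarrow> sqrt (msq d s A v) \<le> c) \<Longrightarrow> col_norm d s A \<le> c"
  unfolding col_norm_alt by (rule cSup_least) (auto intro: exI[of _ "\<lambda>_. 0"] simp: vsq_def)

lemma col_norm_nonneg: "0 \<le> col_norm d s A"
proof -
  have "sqrt (msq d s A (\<lambda>_. 0)) \<le> col_norm d s A" by (rule col_norm_upper) (simp add: vsq_def)
  then show ?thesis by (simp add: msq_def)
qed

lemma msq_scale: "msq d s A (\<lambda>j. c * v j) = (cmod c)\<^sup>2 * msq d s A v"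
proof -
  have e: "(\<Sum>j<s. A k i j * (c * v j)) = c * (\<Sum>j<s. A k i j * v j)" for k i
    by (simp add: sum_distrib_left algebra_simps)
  have "(cmod (\<Sum>j<s. A k i j * (c * v j)))\<^sup>2 = (cmod c)\<^sup>2 * (cmod (\<Sum>j<s. A k i j * v j))\<^sup>2" for k i
    unfolding e by (simp add: norm_mult power_mult_distrib)
  then show ?thesis unfolding msq_def
    by (simp add: sum_distrib_left)
qed

lemma vsq_scale: "vsq s (\<lambda>j. c * v j) = (cmod c)\<^sup>2 * vsq s v"
  unfolding vsq_def by (simp add: norm_mult power_mult_distrib sum_distrib_left)

lemma msq_le: "msq d s A v \<le> (col_norm d s A)\<^sup>2 * vsq s v"
proof (cases "vsq s v = 0")
  case True
  then have "\<forall>j<s. v j = 0" unfolding vsq_def by (subst (asm) sum_nonneg_eq_0_iff) auto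
  then have "msq d s A v = 0" unfolding msq_def by simp
  then show ?thesis using True by simp
next
  case False
  then have pos: "vsq s v > 0" using vsq_nonneg[of s v] by linarith
  define c where "c = complex_of_real (1 / sqrt (vsq s v))"
  have cc: "(cmod c)\<^sup>2 = 1 / vsq s v" using pos unfolding c_def
    by (simp add: norm_divide power_divide power2_abs less_imp_le)
  have "vsq s (\<lambda>j. c * v j) = 1" using pos by (simp add: vsq_scale cc)
  then have "sqrt (msq d s A (\<lambda>j. c * v j)) \<le> col_norm d s A" by (intro col_norm_upper) simp
  then have "msq d s A (\<lambda>j. c * v j) \<le> (col_norm d s A)\<^sup>2"
    using msq_nonneg by (metis real_le_rsqrt real_sqrt_le_iff sqrt_le_D)
  then have "msq d s A v / vsq s v \<le> (col_norm d s A)\<^sup>2" by (simp add: msq_scale cc)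
  then show ?thesis using pos by (simp add: divide_le_eq mult.commute)
qed

lemma l2_tri:
  fixes x y :: "nat \<Rightarrow> nat \<Rightarrow> complex"
  shows "sqrt (\<Sum>k<d. \<Sum>i<s. (cmod (x k i + y k i))\<^sup>2)
     \<le> sqrt (\<Sum>k<d. \<Sum>i<s. (cmod (x k i))\<^sup>2) + sqrt (\<Sum>k<d. \<Sum>i<s. (cmod (y k i))\<^sup>2)"
proof -
  let ?S = "{..<d} \<times> {..<s}"
  have e: "sqrt (\<Sum>k<d. \<Sum>i<s. (g k i)\<^sup>2) = L2_set (\<lambda>p. g (fst p) (snd p)) ?S" for g :: "nat \<Rightarrow> nat \<Rightarrow> real"
    unfolding L2_set_def by (simp add: sum.cartesian_product case_prod_beta)
  have "L2_set (\<lambda>p. cmod (x (fst p) (snd p) + y (fst p) (snd p))) ?S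
     \<le> L2_set (\<lambda>p. cmod (x (fst p) (snd p)) + cmod (y (fst p) (snd p))) ?S"
    by (rule L2_set_mono) (auto intro: norm_triangle_ineq)
  also have "\<dots> \<le> L2_set (\<lambda>p. cmod (x (fst p) (snd p))) ?S + L2_set (\<lambda>p. cmod (y (fst p) (snd p))) ?S"
    by (rule L2_set_triangle_ineq)
  finally show ?thesis unfolding e .
qed

lemma col_norm_add:
  "col_norm d s (\<lambda>k i j. A k i j + B k i j) \<le> col_norm d s A + col_norm d s B"
proof (rule col_norm_least)
  fix v assume v: "vsq s v \<le> 1"
  have e: "(\<Sum>j<s. (A k i j + B k i j) * v j) = (\<Sum>j<s. A k i j * v j) + (\<Sum>j<s. B k i j * v j)" for k i
    by (simp add: distrib_right sum.distrib)
  have "sqrt (msq d s (\<lambda>k i j. A k i j + B k i j) v) \<le> sqrt (msq d s A v) + sqrt (msq d s B v)"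
    unfolding msq_def e by (rule l2_tri)
  also have "\<dots> \<le> col_norm d s A + col_norm d s B"
    using col_norm_upper[OF v] by (intro add_mono)
  finally show "sqrt (msq d s (\<lambda>k i j. A k i j + B k i j) v) \<le> col_norm d s A + col_norm d s B" .
qed

lemma col_norm_cong:
  assumes "\<And>k i j. k < d \<Longrightarrow> i < s \<Longrightarrow> j < s \<Longrightarrow> A k i j = B k i j"
  shows "col_norm d s A = col_norm d s B"
proof -
  have "msq d s A v = msq d s B v" for v unfolding msq_def
    by (intro sum.cong refl) (simp add: assms)
  then show ?thesis unfolding col_norm_alt by simp
qed

lemma block_sum: fixes g :: "nat \<Rightarrow> 'a::comm_monoid_add"
  shows "(\<Sum>i<k*n. g i) = (\<Sum>p<k. \<Sum>i<n. g (p*n+i))"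
proof -
  have "(\<Sum>i\<in>{p*n..<p*n+n}. g i) = (\<Sum>i<n. g (p*n+i))" for p
    using sum.shift_bounds_nat_ivl[of g 0 "p*n" n] by (simp add: atLeast0LessThan add.commute)
  then show ?thesis using sum.nat_group[of "\<lambda>i. g i" n k] by simp
qed

lemma lt_block: "p < k \<Longrightarrow> i < n \<Longrightarrow> p*n + i < k*(n::nat)"
proof -
  assume "p < k" "i < n"
  then have "p*n + i < p*n + n" by simp
  also have "\<dots> = Suc p * n" by simp
  also have "\<dots> \<le> k * n" using \<open>p<k\<close> by (intro mult_right_mono) auto
  finally show ?thesis .
qed

lemma col_norm_kron: "col_norm d (k*n) (kron_id d k n A) \<le> col_norm d n A"
proof (rule col_norm_least)
  fix v assume v: "vsq (k*n) v \<le> 1"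
  define c where "c = col_norm d n A"
  define vp where "vp p = (\<lambda>j. v (p*n+j))" for p
  have a: "(\<Sum>J<k*n. kron_id d k n A k' (p*n+i) J * v J) = (\<Sum>j<n. A k' i j * vp p j)"
    if "k' < d" "p < k" "i < n" for k' p i
  proof -
    have "(\<Sum>J<k*n. kron_id d k n A k' (p*n+i) J * v J)
        = (\<Sum>q<k. \<Sum>j<n. kron_id d k n A k' (p*n+i) (q*n+j) * v (q*n+j))"
      by (rule block_sum)
    also have "\<dots> = (\<Sum>q<k. if q = p then (\<Sum>j<n. A k' i j * vp p j) else 0)"
      using that lt_block[OF that(2,3)]
      by (intro sum.cong refl) (auto simp: kron_id_def vp_def lt_block intro!: sum.cong)
    also have "\<dots> = (\<Sum>j<n. A k' i j * vp p j)" using that by simp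
    finally show ?thesis .
  qed
  have "msq d (k*n) (kron_id d k n A) v = (\<Sum>k'<d. \<Sum>p<k. \<Sum>i<n. (cmod (\<Sum>j<n. A k' i j * vp p j))\<^sup>2)"
    unfolding msq_def by (subst block_sum) (simp add: a)
  also have "\<dots> = (\<Sum>p<k. msq d n A (vp p))" unfolding msq_def by (rule sum.swap)
  also have "\<dots> \<le> (\<Sum>p<k. c\<^sup>2 * vsq n (vp p))" unfolding c_def by (intro sum_mono msq_le)
  also have "\<dots> = c\<^sup>2 * vsq (k*n) v" unfolding vsq_def vp_def by (simp add: block_sum sum_distrib_left)
  also have "\<dots> \<le> c\<^sup>2" using v by (simp add: mult_left_le)
  finally have "msq d (k*n) (kron_id d k n A) v \<le> c\<^sup>2" .
  then show "sqrt (msq d (k*n) (kron_id d k n A) v) \<le> col_norm d n A"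
    using col_norm_nonneg[of d n A] unfolding c_def by (simp add: real_sqrt_le_iff real_le_lsqrt)
qed

lemma op_norm_col: "op_norm s A = col_norm 1 s (\<lambda>_. A)"
proof -
  have "(\<Sum>k<(1::nat). g k) = g 0" for g :: "nat \<Rightarrow> real" by simp
  then show ?thesis unfolding op_norm_def col_norm_def by (simp only:)
qed
lemma entry_le_op_norm: assumes "P < s" "Q < s" shows "cmod (A P Q) \<le> op_norm s A"
proof -
  define v where "v = (\<lambda>j. if j = Q then (1::complex) else 0)"
  have "vsq s v = (\<Sum>j<s. if j = Q then 1 else 0)" unfolding vsq_def v_def
    by (intro sum.cong refl) auto
  also have "\<dots> = 1" using assms by (simp add: sum.delta)
  finally have "vsq s v = 1" .
  then have "sqrt (msq 1 s (\<lambda>_. A) v) \<le> op_norm s A" unfolding op_norm_col by (intro col_norm_upper) simp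
  moreover have "(\<Sum>j<s. A i j * v j) = A i Q" for i
  proof -
    have "(\<Sum>j<s. A i j * v j) = (\<Sum>j<s. if j = Q then A i j else 0)"
      by (intro sum.cong refl) (simp add: v_def)
    also have "\<dots> = A i Q" using assms by simp
    finally show ?thesis .
  qed
  then have "msq 1 s (\<lambda>_. A) v = (\<Sum>i<s. (cmod (A i Q))\<^sup>2)"
    unfolding msq_def by simp
  moreover have "(cmod (A P Q))\<^sup>2 \<le> (\<Sum>i<s. (cmod (A i Q))\<^sup>2)"
    using assms by (intro member_le_sum) auto
  ultimately have "cmod (A P Q) \<le> sqrt (msq 1 s (\<lambda>_. A) v)" by (simp add: real_le_rsqrt)
  then show ?thesis using \<open>sqrt (msq 1 s (\<lambda>_. A) v) \<le> op_norm s A\<close> by linarith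
qed


lemma divmod_aux:
  fixes i t m :: nat assumes "0 < t"
  shows "i mod (m*t) div t = i div t mod m" and "i div (m*t) = i div t div m"
    and "i mod (m*t) mod t = i mod t"
proof -
  have "i mod (t*m) = t * (i div t mod m) + i mod t" by (rule mod_mult2_eq)
  then show "i mod (m*t) div t = i div t mod m" using assms by (simp add: mult.commute)
  show "i div (m*t) = i div t div m" by (metis div_mult2_eq mult.commute)
  show "i mod (m*t) mod t = i mod t" by (simp add: mod_mod_cancel)
qed

lemma div_eq_split:
  fixes x y m :: nat
  shows "(x = y) \<longleftrightarrow> (x div m = y div m \<and> x mod m = y mod m)"
  by (metis div_mult_mod_eq)

lemma kron_comp:
  assumes "n = m * t" "0 < t" "a < d" "i < k*n" "j < k*n"
  shows "kron_id d (k*m) t Z a i j = kron_id d k n Y a i j - kron_id d k n (tup_diff Y (kron_id d m t Z)) a i j"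
proof -
  have n0: "0 < n" using assms(4) by (cases n) auto
  then have m0: "0 < m" using assms(1) by (cases m) auto
  have im: "i mod n < m * t" "j mod n < m*t" using n0 assms(1) by auto
  have km: "k * m * t = k * n" using assms(1) by simp
  have eq: "(i div t = j div t) \<longleftrightarrow> (i div n = j div n \<and> i mod n div t = j mod n div t)"
    using divmod_aux[OF assms(2), of i m] divmod_aux[OF assms(2), of j m] assms(1)
      div_eq_split[of "i div t" "j div t" m] by auto
  show ?thesis
    using assms im km eq divmod_aux[OF assms(2), of i m] divmod_aux[OF assms(2), of j m]
    unfolding kron_id_def tup_diff_def by auto
qed

lemma uball_nbhd:
  assumes "generate_topology_on {uball d t Z r | t Z r. 1 \<le> t \<and> wf_tup d t Z \<and> 0 < r} U"
    and "(n, Y) \<in> U"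
  shows "\<exists>e>0. uball d n Y e \<subseteq> U"
  using assms
proof (induction rule: generate_topology_on.induct)
  case Empty
  then show ?case by simp
next
  case (Int a b)
  then obtain e1 e2 where "e1 > 0" "uball d n Y e1 \<subseteq> a" "e2 > 0" "uball d n Y e2 \<subseteq> b" by auto
  moreover have "uball d n Y (min e1 e2) \<subseteq> uball d n Y e1" "uball d n Y (min e1 e2) \<subseteq> uball d n Y e2"
    unfolding uball_def by auto
  ultimately show ?case by (intro exI[of _ "min e1 e2"]) auto
next
  case (UN K)
  then obtain k where "k \<in> K" "(n, Y) \<in> k" by auto
  moreover have "\<exists>e>0. uball d n Y e \<subseteq> k" using UN \<open>k \<in> K\<close> \<open>(n, Y) \<in> k\<close> by blast
  ultimately obtain e where "e > 0" "uball d n Y e \<subseteq> k" by blast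
  then show ?case using \<open>k \<in> K\<close> by auto
next
  case (Basis s)
  then obtain t Z r where s: "s = uball d t Z r" "1 \<le> t" "wf_tup d t Z" "0 < r" by auto
  with Basis obtain m where m: "m \<ge> 1" "n = m * t" "wf_tup d n Y"
    "col_norm d n (tup_diff Y (kron_id d m t Z)) < r" unfolding uball_def by auto
  define c where "c = col_norm d n (tup_diff Y (kron_id d m t Z))"
  have "uball d n Y (r - c) \<subseteq> s"
  proof
    fix p assume "p \<in> uball d n Y (r - c)"
    then obtain s' X k where p: "p = (s', X)" "k \<ge> 1" "s' = k * n" "wf_tup d s' X"
      "col_norm d s' (tup_diff X (kron_id d k n Y)) < r - c" unfolding uball_def by auto
    have "col_norm d s' (tup_diff X (kron_id d (k*m) t Z))
        = col_norm d s' (\<lambda>a i j. tup_diff X (kron_id d k n Y) a i j + kron_id d k n (tup_diff Y (kron_id d m t Z)) a i j)"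
    proof (intro col_norm_cong)
      fix a i j assume h: "a < d" "i < s'" "j < s'"
      have "0 < t" using s(2) by simp
      from kron_comp[OF m(2) this h(1), where i=i and j=j and k=k and Z=Z and Y=Y] h p(3)
      show "tup_diff X (kron_id d (k*m) t Z) a i j = tup_diff X (kron_id d k n Y) a i j + kron_id d k n (tup_diff Y (kron_id d m t Z)) a i j"
        by (simp add: tup_diff_def)
    qed
    also have "\<dots> \<le> col_norm d s' (tup_diff X (kron_id d k n Y)) + col_norm d (k*n) (kron_id d k n (tup_diff Y (kron_id d m t Z)))"
      using col_norm_add p(3) by blast
    also have "\<dots> < r"
      using col_norm_kron[of d k n "tup_diff Y (kron_id d m t Z)"] p(5) unfolding c_def by linarith
    finally have cn: "col_norm d s' (tup_diff X (kron_id d (k*m) t Z)) < r" .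
    have km1: "k * m \<ge> 1" using p(2) m(1) by simp
    have seq: "s' = k * m * t" using p(3) m(2) by simp
    have "\<exists>m'\<ge>1. s' = m' * t \<and> wf_tup d s' X \<and> col_norm d s' (tup_diff X (kron_id d m' t Z)) < r"
      apply (rule exI[of _ "k*m"]) using cn km1 seq p(4) by blast
    then show "p \<in> s" unfolding s(1) uball_def p(1) by simp
  qed
  moreover have "r - c > 0" using m(4) unfolding c_def by simp
  ultimately show ?case by blast
qed



lemma emon_zero:
  assumes "(\<lambda>i j. 0) \<in> set Gs"
  shows "emon n \<alpha> \<beta> Gs = (\<lambda>i j. 0)"
  using assms
proof (induction \<alpha> arbitrary: \<beta> Gs)
  case Nil then show ?case by simp
next
  case (Cons a \<alpha>)
  show ?case
  proof (cases \<beta>)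
    case Nil then show ?thesis by simp
  next
    case (Cons b \<beta>')
    obtain G Gs' where G: "Gs = G # Gs'" using Cons.prems by (cases Gs) auto
    show ?thesis
    proof (cases "G = (\<lambda>i j. 0)")
      case True
      then show ?thesis unfolding Cons G by (simp add: mprod_def fun_eq_iff)
    next
      case False
      then have "(\<lambda>i j. 0) \<in> set Gs'" using Cons.prems G by auto
      then have "emon n \<alpha> \<beta>' Gs' = (\<lambda>i j. 0)" by (rule Cons.IH)
      then show ?thesis unfolding Cons G by (simp add: mprod_def fun_eq_iff)
    qed
  qed
qed

lemma coeff_map_zero:
  assumes "(\<lambda>i j. 0) \<in> set Gs"
  shows "coeff_map n fhat \<omega> Gs i j = 0"
  unfolding coeff_map_def using emon_zero[OF assms] by simp

lemma emon_units:
  assumes "length Gs = length xs" "length ys = length xs"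
    "\<And>s. s < length xs \<Longrightarrow> Gs ! s = (\<lambda>i j. c * unitm (xs!s) (ys!s) i j)"
    "\<forall>x\<in>set xs. x < n" "\<forall>y\<in>set ys. y < n" "i < n" "j < n"
    "length \<alpha> = length xs + 1" "length \<beta> = length xs + 1"
  shows "emon n \<alpha> \<beta> Gs i j = (if \<alpha> = i # ys \<and> \<beta> = xs @ [j] then c ^ length xs else 0)"
  using assms
proof (induction xs arbitrary: Gs ys \<alpha> \<beta> i)
  case Nil
  then obtain a b where "\<alpha> = [a]" "\<beta> = [b]" "Gs = []" "ys = []"
    by (metis One_nat_def length_0_conv length_Suc_conv list.size(3) add_0)
  then show ?case by (auto simp: unitm_def)
next
  case (Cons x xs)
  obtain a \<alpha>' where al: "\<alpha> = a # \<alpha>'" using Cons.prems(8) by (cases \<alpha>) auto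
  obtain b \<beta>' where be: "\<beta> = b # \<beta>'" using Cons.prems(9) by (cases \<beta>) auto
  obtain y ys' where ys: "ys = y # ys'" using Cons.prems(2) by (cases ys) auto
  obtain G Gs' where Gs: "Gs = G # Gs'" using Cons.prems(1) by (cases Gs) auto
  have G: "G = (\<lambda>i j. c * unitm x y i j)" using Cons.prems(3)[of 0] Gs ys by simp
  have Gs': "Gs' ! s = (\<lambda>i j. c * unitm (xs!s) (ys'!s) i j)" if "s < length xs" for s
    using Cons.prems(3)[of "Suc s"] that Gs ys by simp
  have xn: "x < n" "y < n" using Cons.prems(4,5) ys by auto
  have IH: "emon n \<alpha>' \<beta>' Gs' l j = (if \<alpha>' = l # ys' \<and> \<beta>' = xs @ [j] then c ^ length xs else 0)"
    if "l < n" for l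
    using Cons.prems Gs ys al be that Gs' by (intro Cons.IH) auto
  have inner: "mprod n (unitm a b) G i l = (if i = a \<and> b = x \<and> l = y then c else 0)" if "l < n" for l
  proof -
    have "mprod n (unitm a b) G i l = (\<Sum>l'<n. (if i = a \<and> l' = b then 1 else 0) * (c * (if l' = x \<and> l = y then 1 else 0)))"
      using that Cons.prems(6) by (simp add: mprod_def G unitm_def)
    also have "\<dots> = (\<Sum>l'<n. if l' = b then (if i = a \<and> b = x \<and> l = y then c else 0) else 0)"
      by (intro sum.cong refl) auto
    also have "\<dots> = (if i = a \<and> b = x \<and> l = y then c else 0)" using xn by auto
    finally show ?thesis .
  qed
  have "emon n \<alpha> \<beta> Gs i j = (\<Sum>l<n. mprod n (unitm a b) G i l * emon n \<alpha>' \<beta>' Gs' l j)"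
    unfolding al be Gs using Cons.prems(6,7) by (simp add: mprod_def)
  also have "\<dots> = (\<Sum>l<n. if l = y then (if i = a \<and> b = x then c * emon n \<alpha>' \<beta>' Gs' y j else 0) else 0)"
    using inner by (intro sum.cong refl) auto
  also have "\<dots> = (if i = a \<and> b = x then c * emon n \<alpha>' \<beta>' Gs' y j else 0)" using xn by simp
  also have "\<dots> = (if \<alpha> = i # ys \<and> \<beta> = (x # xs) @ [j] then c ^ length (x # xs) else 0)"
    using IH[OF xn(2)] al be ys by auto
  finally show ?case .
qed

lemma coeff_units:
  assumes "length Gs = length xs" "length ys = length xs"
    "\<And>s. s < length xs \<Longrightarrow> Gs ! s = (\<lambda>i j. c * unitm (xs!s) (ys!s) i j)"
    "\<forall>x\<in>set xs. x < n" "\<forall>y\<in>set ys. y < n" "i < n" "j < n"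
  shows "coeff_map n fhat \<omega> Gs i j = c ^ length xs * fhat (i # ys) (xs @ [j]) \<omega>"
proof -
  have "coeff_map n fhat \<omega> Gs i j = (\<Sum>\<alpha>\<in>words n (length xs + 1). \<Sum>\<beta>\<in>words n (length xs + 1).
       if \<alpha> = i # ys then (if \<beta> = xs @ [j] then fhat \<alpha> \<beta> \<omega> * c ^ length xs else 0) else 0)"
    unfolding coeff_map_def assms(1)
    by (intro sum.cong refl) (auto simp: emon_units[OF assms] words_def)
  also have "\<dots> = c ^ length xs * fhat (i # ys) (xs @ [j]) \<omega>"
  proof -
    have fin: "finite (words n (Suc (length xs)))" unfolding words_def
      using finite_lists_length_eq[of "{..<n}" "length xs + 1"] by (simp add: conj_commute)
    have m1: "i # ys \<in> words n (Suc (length xs))" "xs @ [j] \<in> words n (Suc (length xs))"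
      using assms unfolding words_def by auto
    have "(\<Sum>\<alpha>\<in>words n (length xs + 1). \<Sum>\<beta>\<in>words n (length xs + 1).
       if \<alpha> = i # ys then (if \<beta> = xs @ [j] then fhat \<alpha> \<beta> \<omega> * c ^ length xs else 0) else 0)
      = (\<Sum>\<alpha>\<in>words n (length xs + 1). if \<alpha> = i # ys then fhat \<alpha> (xs @ [j]) \<omega> * c ^ length xs else 0)"
    proof (intro sum.cong refl)
      fix \<alpha> show "(\<Sum>\<beta>\<in>words n (length xs + 1).
       if \<alpha> = i # ys then (if \<beta> = xs @ [j] then fhat \<alpha> \<beta> \<omega> * c ^ length xs else 0) else 0)
        = (if \<alpha> = i # ys then fhat \<alpha> (xs @ [j]) \<omega> * c ^ length xs else 0)"
        by (cases "\<alpha> = i # ys") (simp_all add: fin m1)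
    qed
    then show ?thesis using fin m1 by (simp add: sum.delta mult.commute)
  qed
  finally show ?thesis .
qed



definition tal :: "(nat \<times> nat \<times> nat) list \<Rightarrow> nat \<Rightarrow> nat list" where
  "tal \<nu> a = map fst \<nu> @ [a]"
definition txs :: "(nat \<times> nat \<times> nat) list \<Rightarrow> nat list" where
  "txs \<nu> = map (fst \<circ> snd) \<nu>"
definition tks :: "(nat \<times> nat \<times> nat) list \<Rightarrow> nat list" where
  "tks \<nu> = map (snd \<circ> snd) \<nu>"
definition tZ :: "nat \<Rightarrow> nat \<Rightarrow> (nat \<times> nat \<times> nat) list \<Rightarrow> nat \<Rightarrow> ctup" where
  "tZ d n \<nu> a = (\<lambda>k I J. if k < d \<and> I < Suc (length \<nu>) * n \<and> J < Suc (length \<nu>) * n \<and>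
      I div n < length \<nu> \<and> J div n = Suc (I div n) \<and> k = tks \<nu> ! (I div n) \<and>
      I mod n = txs \<nu> ! (I div n) \<and> J mod n = tl (tal \<nu> a) ! (I div n) then 1 else 0)"

lemma sum_only:
  assumes "finite A" "x0 \<in> A" "\<And>x. x \<in> A \<Longrightarrow> x \<noteq> x0 \<Longrightarrow> g x = 0"
  shows "sum g A = g x0"
proof -
  have "sum g A = g x0 + sum g (A - {x0})" using assms by (simp add: sum.remove)
  also have "sum g (A - {x0}) = 0" using assms by (intro sum.neutral) auto
  finally show ?thesis by simp
qed

context
  fixes d n :: nat and \<nu> :: "(nat \<times> nat \<times> nat) list" and a :: nat
  assumes V: "set \<nu> \<subseteq> {(i, j, k). i < n \<and> j < n \<and> k < d}" and an: "a < n"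
begin

lemma n0: "0 < n" using an by simp

lemma len: "length (tks \<nu>) = length \<nu>" "length (txs \<nu>) = length \<nu>" "length (tl (tal \<nu> a)) = length \<nu>"
    "length (tal \<nu> a) = Suc (length \<nu>)"
  by (auto simp: tks_def txs_def tal_def)

lemma ent: "p < length \<nu> \<Longrightarrow> tks \<nu> ! p < d \<and> txs \<nu> ! p < n \<and> tl (tal \<nu> a) ! p < n"
proof -
  assume p: "p < length \<nu>"
  then have "\<nu> ! p \<in> set \<nu>" by simp
  then have e: "fst (\<nu>!p) < n" "fst (snd (\<nu>!p)) < n" "snd (snd (\<nu>!p)) < d" using V by auto
  have "tl (tal \<nu> a) ! p = (if Suc p < length \<nu> then fst (\<nu> ! Suc p) else a)"
    unfolding tal_def using p by (simp add: nth_tl nth_append)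
  moreover have "Suc p < length \<nu> \<Longrightarrow> fst (\<nu> ! Suc p) < n"
  proof -
    assume "Suc p < length \<nu>" then have "\<nu> ! Suc p \<in> set \<nu>" by simp
    then show ?thesis using V by auto
  qed
  ultimately show ?thesis using e p an by (auto simp: tks_def txs_def)
qed

lemma hd_tal: "hd (tal \<nu> a) < n" "hd (tal \<nu> a) # tl (tal \<nu> a) = tal \<nu> a"
proof -
  show "hd (tal \<nu> a) # tl (tal \<nu> a) = tal \<nu> a" by (simp add: tal_def)
  show "hd (tal \<nu> a) < n"
  proof (cases \<nu>)
    case Nil then show ?thesis using an by (simp add: tal_def)
  next
    case (Cons x xs) then have "x \<in> set \<nu>" by simp
    then show ?thesis using V Cons by (auto simp: tal_def)
  qed
qed

lemma blk_tZ:
  assumes "p < Suc (length \<nu>)" "q < Suc (length \<nu>)"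
  shows "blk n (\<lambda>k I J. c * tZ d n \<nu> a k I J) k p q =
    (if p < length \<nu> \<and> q = Suc p \<and> k = tks \<nu> ! p then (\<lambda>i j. c * unitm (txs \<nu> ! p) (tl (tal \<nu> a) ! p) i j) else (\<lambda>i j. 0))"
proof (intro ext)
  fix i j
  show "blk n (\<lambda>k I J. c * tZ d n \<nu> a k I J) k p q i j =
    (if p < length \<nu> \<and> q = Suc p \<and> k = tks \<nu> ! p then (\<lambda>i j. c * unitm (txs \<nu> ! p) (tl (tal \<nu> a) ! p) i j) else (\<lambda>i j. 0)) i j"
  proof (cases "i < n \<and> j < n")
    case True
    have b: "p * n + i < Suc (length \<nu>) * n" "q * n + j < Suc (length \<nu>) * n"
      using lt_block[OF assms(1), of i n] lt_block[OF assms(2), of j n] True by auto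
    show ?thesis using True b ent[of p] n0 unfolding blk_def tZ_def unitm_def by auto
  next
    case False
    then show ?thesis using ent[of p] unfolding blk_def unitm_def by auto
  qed
qed

lemma fin_words: "finite (words N l)"
  unfolding words_def using finite_lists_length_eq[of "{..<N}" l] by (simp add: conj_commute)

lemma K1:
  fixes c :: complex
  assumes w: "\<omega> \<in> words d l" "ps \<in> words (Suc (length \<nu>)) (l + 1)" "ps ! 0 = 0" "ps ! l = length \<nu>"
    and nz: "(\<lambda>i j. 0) \<notin> set (map (\<lambda>t. blk n (\<lambda>k I J. c * tZ d n \<nu> a k I J) (\<omega> ! t) (ps ! t) (ps ! (t + 1))) [0..<l])"
  shows "l = length \<nu> \<and> ps = [0..<Suc (length \<nu>)] \<and> \<omega> = tks \<nu>"
proof -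
  have lens: "length ps = l + 1" "length \<omega> = l" using w unfolding words_def by auto
  have bnd: "ps ! s < Suc (length \<nu>)" if "s \<le> l" for s
  proof -
    have "ps ! s \<in> set ps" using that lens by simp
    then show ?thesis using w(2) unfolding words_def by auto
  qed
  have st: "ps ! s < length \<nu> \<and> ps ! (s+1) = Suc (ps ! s) \<and> \<omega> ! s = tks \<nu> ! (ps ! s)" if "s < l" for s
  proof -
    have "blk n (\<lambda>k I J. c * tZ d n \<nu> a k I J) (\<omega> ! s) (ps ! s) (ps ! (s + 1)) \<noteq> (\<lambda>i j. 0)"
      using nz that by (metis (no_types, lifting) add_0 diff_zero in_set_conv_nth length_map length_upt nth_map nth_upt)
    then show ?thesis using blk_tZ[OF bnd bnd, of s "s+1" c "\<omega> ! s"] that by (auto split: if_splits)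
  qed
  have ps_id: "ps ! s = s" if "s \<le> l" for s
    using that
  proof (induction s)
    case 0 then show ?case using w(3) by simp
  next
    case (Suc s) then show ?case using st[of s] by simp
  qed
  have l: "l = length \<nu>" using ps_id[of l] w(4) by simp
  have "ps = [0..<Suc (length \<nu>)]"
    by (rule nth_equalityI) (use lens l ps_id in \<open>auto simp del: upt_Suc simp: nth_upt\<close>)
  moreover have "\<omega> = tks \<nu>"
  proof (rule nth_equalityI)
    show "length \<omega> = length (tks \<nu>)" using lens l len by simp
    fix i assume "i < length \<omega>"
    then have "i < l" using lens by simp
    then show "\<omega> ! i = tks \<nu> ! i" using st[of i] ps_id[of i] by simp
  qed
  ultimately show ?thesis using l by simp
qed

lemma tt_eval:
  fixes c :: complex
  assumes bn: "b < n"
  shows "tt_term d n fhat Y (Suc (length \<nu>)) (\<lambda>k I J. kron_id d (Suc (length \<nu>)) n Y k I J + c * tZ d n \<nu> a k I J) l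
     (hd (tal \<nu> a)) (length \<nu> * n + b) = (if l = length \<nu> then c ^ length \<nu> * fab fhat a b \<nu> else 0)"
proof -
  define H where "H = (\<lambda>k I J. c * tZ d n \<nu> a k I J)"
  define P where "P = hd (tal \<nu> a)"
  define PS where "PS = {ps \<in> words (Suc (length \<nu>)) (l + 1). ps ! 0 = 0 \<and> ps ! l = length \<nu>}"
  define F where "F \<omega> ps = coeff_map n fhat \<omega> (map (\<lambda>t. blk n H (\<omega> ! t) (ps ! t) (ps ! (t + 1))) [0..<l]) P b" for \<omega> ps
  have Pn: "P < n" unfolding P_def by (rule hd_tal)
  have "tt_term d n fhat Y (Suc (length \<nu>)) (\<lambda>k I J. kron_id d (Suc (length \<nu>)) n Y k I J + c * tZ d n \<nu> a k I J) l
     P (length \<nu> * n + b) = (\<Sum>\<omega>\<in>words d l. \<Sum>ps\<in>PS. F \<omega> ps)"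
  proof -
    have Heq: "tup_diff (\<lambda>k I J. kron_id d (Suc (length \<nu>)) n Y k I J + c * tZ d n \<nu> a k I J) (kron_id d (Suc (length \<nu>)) n Y) = H"
      unfolding tup_diff_def H_def by simp
    have dm: "P div n = 0" "P mod n = P" "(length \<nu> * n + b) div n = length \<nu>" "(length \<nu> * n + b) mod n = b"
      using Pn bn by auto
    show ?thesis unfolding tt_term_def Let_def Heq dm PS_def F_def ..
  qed
  also have "\<dots> = (if l = length \<nu> then c ^ length \<nu> * fab fhat a b \<nu> else 0)"
  proof -
    have finPS: "finite PS" unfolding PS_def using fin_words by simp
    have Fz: "F \<omega> ps = 0" if "\<omega> \<in> words d l" "ps \<in> PS" "\<not> (l = length \<nu> \<and> ps = [0..<Suc (length \<nu>)] \<and> \<omega> = tks \<nu>)" for \<omega> ps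
    proof (rule ccontr)
      assume "F \<omega> ps \<noteq> 0"
      then have "(\<lambda>i j. 0) \<notin> set (map (\<lambda>t. blk n H (\<omega> ! t) (ps ! t) (ps ! (t + 1))) [0..<l])"
        unfolding F_def using coeff_map_zero by metis
      then show False using K1[of \<omega> l ps c] that unfolding PS_def H_def by auto
    qed
    show ?thesis
    proof (cases "l = length \<nu>")
      case False
      then show ?thesis using Fz by (simp add: sum.neutral)
    next
      case True
      have ps0: "[0..<Suc (length \<nu>)] \<in> PS" unfolding PS_def words_def True by (auto simp: nth_append)
      have tk: "tks \<nu> \<in> words d l" unfolding words_def True using len ent by (auto simp: in_set_conv_nth)
      have "(\<Sum>\<omega>\<in>words d l. \<Sum>ps\<in>PS. F \<omega> ps) = (\<Sum>ps\<in>PS. F (tks \<nu>) ps)"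
        by (rule sum_only[OF fin_words tk]) (use Fz in \<open>auto intro: sum.neutral\<close>)
      also have "\<dots> = F (tks \<nu>) [0..<Suc (length \<nu>)]"
        by (rule sum_only[OF finPS ps0]) (use Fz tk in auto)
      also have "\<dots> = c ^ length (txs \<nu>) * fhat (P # tl (tal \<nu> a)) (txs \<nu> @ [b]) (tks \<nu>)"
        unfolding F_def True
      proof (rule coeff_units)
        show "length (map (\<lambda>t. blk n H (tks \<nu> ! t) ([0..<Suc (length \<nu>)] ! t) ([0..<Suc (length \<nu>)] ! (t + 1))) [0..<length \<nu>]) = length (txs \<nu>)"
          using len by simp
        show "length (tl (tal \<nu> a)) = length (txs \<nu>)" using len by simp
        fix s assume "s < length (txs \<nu>)"
        then have s: "s < length \<nu>" using len by simp
        have "[0..<Suc (length \<nu>)] ! s = s" "[0..<Suc (length \<nu>)] ! (s + 1) = Suc s" using s by (simp_all add: nth_upt del: upt_Suc)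
        then show "map (\<lambda>t. blk n H (tks \<nu> ! t) ([0..<Suc (length \<nu>)] ! t) ([0..<Suc (length \<nu>)] ! (t + 1))) [0..<length \<nu>] ! s =
          (\<lambda>i j. c * unitm (txs \<nu> ! s) (tl (tal \<nu> a) ! s) i j)"
          using s blk_tZ[of s "Suc s" c "tks \<nu> ! s"] unfolding H_def by simp
      next
        show "\<forall>x\<in>set (txs \<nu>). x < n" "\<forall>y\<in>set (tl (tal \<nu> a)). y < n"
          using ent len by (auto simp: in_set_conv_nth)
      qed (use Pn bn in auto)
      also have "\<dots> = c ^ length \<nu> * fab fhat a b \<nu>"
        unfolding P_def hd_tal(2) fab_def len by (simp add: tal_def txs_def tks_def)
      finally show ?thesis using True by simp
    qed
  qed
  finally show ?thesis unfolding P_def .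
qed

end


lemma radius_pos:
  fixes g :: "'v list \<Rightarrow> complex"
  assumes fin: "finite V" and ne: "V \<noteq> {}" and dp: "0 < \<delta>"
    and bnd: "\<And>\<nu>. set \<nu> \<subseteq> V \<Longrightarrow> cmod (g \<nu>) \<le> B / \<delta> ^ length \<nu>"
  shows "fps_radius V g > 0"
proof -
  define N where "N = real (card V)"
  have N1: "N \<ge> 1" using fin ne unfolding N_def by (simp add: Suc_leI card_gt_0_iff)
  define B' where "B' = max 1 B"
  have B1: "B' \<ge> 1" unfolding B'_def by simp
  define K where "K = sqrt N * B' / \<delta>"
  have K0: "K > 0" unfolding K_def using N1 B1 dp by simp
  define S where "S l = (\<Sum>\<nu>\<in>{\<nu>. length \<nu> = l \<and> set \<nu> \<subseteq> V}. (cmod (g \<nu>))\<^sup>2)" for l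
  have SK: "S l powr (1 / (2 * real l)) \<le> K" if l1: "l \<ge> 1" for l
  proof -
    have W: "{\<nu>. length \<nu> = l \<and> set \<nu> \<subseteq> V} = {xs. set xs \<subseteq> V \<and> length xs = l}" by auto
    have cardW: "real (card {\<nu>. length \<nu> = l \<and> set \<nu> \<subseteq> V}) = N ^ l"
      unfolding W N_def using card_lists_length_eq[OF fin] by simp
    have "S l \<le> (\<Sum>\<nu>\<in>{\<nu>. length \<nu> = l \<and> set \<nu> \<subseteq> V}. (B' / \<delta> ^ l)\<^sup>2)"
      unfolding S_def
    proof (intro sum_mono power_mono)
      fix \<nu> assume "\<nu> \<in> {\<nu>. length \<nu> = l \<and> set \<nu> \<subseteq> V}"
      then have "cmod (g \<nu>) \<le> B / \<delta> ^ l" using bnd by auto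
      also have "\<dots> \<le> B' / \<delta> ^ l" unfolding B'_def using dp by (simp add: divide_right_mono)
      finally show "cmod (g \<nu>) \<le> B' / \<delta> ^ l" .
    qed simp
    also have "\<dots> = N ^ l * (B'\<^sup>2 / \<delta> ^ (2 * l))"
    proof -
      have "(\<delta> ^ l)\<^sup>2 = \<delta> ^ (2 * l)" by (metis power_mult mult.commute)
      then show ?thesis using cardW by (simp add: power_divide)
    qed
    also have "\<dots> \<le> N ^ l * (B' ^ (2 * l) / \<delta> ^ (2 * l))"
    proof -
      have "B'\<^sup>2 \<le> B' ^ (2 * l)" using B1 l1 by (intro power_increasing) auto
      then show ?thesis using N1 dp by (intro mult_left_mono divide_right_mono) auto
    qed
    also have "\<dots> = K ^ (2 * l)" unfolding K_def using N1
      by (simp add: power_divide power_mult_distrib power_mult real_sqrt_pow2)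
    finally have S1: "S l \<le> K ^ (2 * l)" .
    have S0: "0 \<le> S l" unfolding S_def by (intro sum_nonneg) auto
    have "S l powr (1 / (2 * real l)) \<le> (K ^ (2 * l)) powr (1 / (2 * real l))"
      using S0 S1 by (intro powr_mono2) auto
    also have "\<dots> = K"
    proof -
      have "K ^ (2 * l) = K powr real (2 * l)" using K0 by (rule powr_realpow[symmetric])
      then show ?thesis using l1 K0 by (simp add: powr_powr)
    qed
    finally show ?thesis .
  qed
  define L where "L = limsup (\<lambda>l. ereal (S l powr (1 / (2 * real l))))"
  have "L \<le> ereal K" unfolding L_def
    by (rule Limsup_bounded) (use SK in \<open>auto simp: eventually_sequentially intro!: exI[of _ 1]\<close>)
  moreover have "0 \<le> L" unfolding L_def
    by (rule le_Limsup) auto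
  ultimately have "inverse (ereal K) \<le> inverse L" by (rule ereal_inverse_antimono[rotated])
  moreover have "0 < inverse (ereal K)" using K0 by simp
  ultimately have "0 < inverse L" by order
  then show ?thesis unfolding fps_radius_def L_def S_def .
qed

context
  fixes d n :: nat and \<nu> :: "(nat \<times> nat \<times> nat) list" and a :: nat
  assumes V: "set \<nu> \<subseteq> {(i, j, k). i < n \<and> j < n \<and> k < d}" and an: "a < n"
begin

lemma tZ_entry:
  assumes "k < d" "p < Suc (length \<nu>)" "i < n" "J < Suc (length \<nu>) * n"
  shows "tZ d n \<nu> a k (p*n+i) J = (if p < length \<nu> \<and> k = tks \<nu> ! p \<and> i = txs \<nu> ! p \<and>
      J = Suc p * n + tl (tal \<nu> a) ! p then 1 else 0)"
proof -
  have pi: "p * n + i < Suc (length \<nu>) * n" using lt_block assms(2,3) by blast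
  have dm: "(p*n+i) div n = p" "(p*n+i) mod n = i" using assms(3) by auto
  have "(J div n = Suc p \<and> J mod n = tl (tal \<nu> a) ! p) \<longleftrightarrow> J = Suc p * n + tl (tal \<nu> a) ! p"
    if "p < length \<nu>"
  proof -
    have y: "tl (tal \<nu> a) ! p < n" using ent[OF V an that] by simp
    show ?thesis
    proof
      assume "J div n = Suc p \<and> J mod n = tl (tal \<nu> a) ! p"
      then show "J = Suc p * n + tl (tal \<nu> a) ! p" by (metis div_mult_mod_eq mult.commute)
    next
      assume "J = Suc p * n + tl (tal \<nu> a) ! p"
      moreover have "(Suc p * n + tl (tal \<nu> a) ! p) div n = Suc p" using y
        by (subst add.commute, subst div_mult_self1) auto
      moreover have "(Suc p * n + tl (tal \<nu> a) ! p) mod n = tl (tal \<nu> a) ! p" using y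
        by (subst add.commute, subst mod_mult_self1) auto
      ultimately show "J div n = Suc p \<and> J mod n = tl (tal \<nu> a) ! p" by simp
    qed
  qed
  then show ?thesis unfolding tZ_def using assms pi dm by auto
qed

lemma tZ_msq: "msq d (Suc (length \<nu>) * n) (tZ d n \<nu> a) v \<le> vsq (Suc (length \<nu>) * n) v"
proof -
  define m where "m = Suc (length \<nu>)"
  define yl where "yl = tl (tal \<nu> a)"
  define w where "w p = (cmod (v (Suc p * n + yl ! p)))\<^sup>2" for p
  have row: "(\<Sum>J<m*n. tZ d n \<nu> a k (p*n+i) J * v J) =
      (if p < length \<nu> \<and> k = tks \<nu> ! p \<and> i = txs \<nu> ! p then v (Suc p * n + yl ! p) else 0)"
    if "k < d" "p < m" "i < n" for k p i
  proof -
    have "(\<Sum>J<m*n. tZ d n \<nu> a k (p*n+i) J * v J) =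
       (\<Sum>J<m*n. if J = Suc p * n + yl ! p then (if p < length \<nu> \<and> k = tks \<nu> ! p \<and> i = txs \<nu> ! p then v J else 0) else 0)"
      using tZ_entry that unfolding m_def yl_def by (intro sum.cong refl) auto
    also have "\<dots> = (if p < length \<nu> \<and> k = tks \<nu> ! p \<and> i = txs \<nu> ! p then v (Suc p * n + yl ! p) else 0)"
    proof (cases "p < length \<nu>")
      case True
      have "Suc p * n + yl ! p < m * n" unfolding m_def
        using lt_block[of "Suc p" "Suc (length \<nu>)" "yl ! p" n] ent[OF V an True] True unfolding yl_def by simp
      then show ?thesis by simp
    qed simp
    finally show ?thesis .
  qed
  have "msq d (m*n) (tZ d n \<nu> a) v = (\<Sum>k<d. \<Sum>p<m. \<Sum>i<n. (cmod (\<Sum>J<m*n. tZ d n \<nu> a k (p*n+i) J * v J))\<^sup>2)"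
    unfolding msq_def by (simp add: block_sum)
  also have "\<dots> = (\<Sum>k<d. \<Sum>p<m. \<Sum>i<n. if p < length \<nu> \<and> k = tks \<nu> ! p \<and> i = txs \<nu> ! p then w p else 0)"
    using row unfolding w_def by (intro sum.cong refl) auto
  also have "\<dots> = (\<Sum>p<m. \<Sum>k<d. \<Sum>i<n. if p < length \<nu> \<and> k = tks \<nu> ! p \<and> i = txs \<nu> ! p then w p else 0)"
    by (rule sum.swap)
  also have "\<dots> = (\<Sum>p<m. if p < length \<nu> then w p else 0)"
  proof (intro sum.cong refl)
    fix p
    show "(\<Sum>k<d. \<Sum>i<n. if p < length \<nu> \<and> k = tks \<nu> ! p \<and> i = txs \<nu> ! p then w p else 0) = (if p < length \<nu> then w p else 0)"
    proof (cases "p < length \<nu>")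
      case True
      then have "tks \<nu> ! p < d" "txs \<nu> ! p < n" using ent[OF V an True] by auto
      then have "(\<Sum>i<n. if k = tks \<nu> ! p \<and> i = txs \<nu> ! p then w p else 0) = (if k = tks \<nu> ! p then w p else 0)" for k
        by (cases "k = tks \<nu> ! p") simp_all
      then show ?thesis using True \<open>tks \<nu> ! p < d\<close> by simp
    qed simp
  qed
  also have "\<dots> \<le> (\<Sum>p<m. if p < length \<nu> then (\<Sum>j<n. (cmod (v (Suc p * n + j)))\<^sup>2) else 0)"
  proof (intro sum_mono)
    fix p assume "p \<in> {..<m}"
    show "(if p < length \<nu> then w p else 0) \<le> (if p < length \<nu> then (\<Sum>j<n. (cmod (v (Suc p * n + j)))\<^sup>2) else 0)"
    proof (cases "p < length \<nu>")
      case True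
      then have "yl ! p < n" using ent[OF V an True] unfolding yl_def by auto
      then have "w p \<le> (\<Sum>j<n. (cmod (v (Suc p * n + j)))\<^sup>2)" unfolding w_def
        by (intro member_le_sum[where f = "\<lambda>j. (cmod (v (Suc p * n + j)))\<^sup>2"]) auto
      then show ?thesis using True by simp
    qed simp
  qed
  also have "\<dots> = (\<Sum>p<length \<nu>. \<Sum>j<n. (cmod (v (Suc p * n + j)))\<^sup>2)"
    unfolding m_def by (simp add: sum.lessThan_Suc)
  also have "\<dots> \<le> (\<Sum>q<m. \<Sum>j<n. (cmod (v (q * n + j)))\<^sup>2)"
    unfolding m_def sum.lessThan_Suc_shift by (simp add: sum_nonneg)
  also have "\<dots> = vsq (m*n) v" unfolding vsq_def by (simp add: block_sum)
  finally show ?thesis unfolding m_def .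
qed

lemma tZ_norm: "col_norm d (Suc (length \<nu>) * n) (\<lambda>k I J. c * tZ d n \<nu> a k I J) \<le> cmod c"
proof (rule col_norm_least)
  fix v assume v: "vsq (Suc (length \<nu>) * n) v \<le> 1"
  define s where "s = Suc (length \<nu>) * n"
  have e: "(\<Sum>j<s. c * tZ d n \<nu> a k i j * v j) = c * (\<Sum>j<s. tZ d n \<nu> a k i j * v j)" for k i
    by (simp add: sum_distrib_left mult.assoc)
  have e2: "(cmod (\<Sum>j<s. c * tZ d n \<nu> a k i j * v j))\<^sup>2 = (cmod c)\<^sup>2 * (cmod (\<Sum>j<s. tZ d n \<nu> a k i j * v j))\<^sup>2" for k i
    unfolding e by (simp add: norm_mult power_mult_distrib)
  have "msq d s (\<lambda>k I J. c * tZ d n \<nu> a k I J) v = (cmod c)\<^sup>2 * msq d s (tZ d n \<nu> a) v"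
    unfolding msq_def e2 by (simp add: sum_distrib_left)
  moreover have "msq d s (tZ d n \<nu> a) v \<le> 1" using tZ_msq[of v] v unfolding s_def by linarith
  ultimately have "msq d s (\<lambda>k I J. c * tZ d n \<nu> a k I J) v \<le> (cmod c)\<^sup>2"
    by (simp add: mult_left_le)
  then show "sqrt (msq d (Suc (length \<nu>) * n) (\<lambda>k I J. c * tZ d n \<nu> a k I J) v) \<le> cmod c"
    unfolding s_def by (simp add: real_sqrt_le_iff real_le_lsqrt)
qed

end


theorem mainTheorem12:
  fixes d n :: nat and Y :: ctup and \<Omega> :: "(nat \<times> ctup) set"
    and f :: "nat \<Rightarrow> ctup \<Rightarrow> cmat"
    and fhat :: "nat list \<Rightarrow> nat list \<Rightarrow> nat list \<Rightarrow> complex"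
  assumes "1 \<le> d" and "1 \<le> n"
    and "wf_tup d n Y" and "(n, Y) \<in> \<Omega>"
    and "uniformly_analytic d \<Omega> f"
    and "\<exists>r>0. \<forall>m X. 1 \<le> m \<longrightarrow> wf_tup d (m * n) X \<longrightarrow>
           col_norm d (m * n) (tup_diff X (kron_id d m n Y)) < r \<longrightarrow>
           (m * n, X) \<in> \<Omega> \<and>
           (\<forall>P < m * n. \<forall>Q < m * n.
              (\<lambda>l. tt_term d n fhat Y m X l P Q) sums f (m * n) X P Q)"
  shows "\<forall>a<n. \<forall>b<n. fps_radius {(i, j, k). i < n \<and> j < n \<and> k < d} (fab fhat a b) > 0"
proof (intro allI impI)
  fix a b assume an: "a < n" and bn: "b < n"
  obtain r where r0: "r > 0" and hr: "\<forall>m X. 1 \<le> m \<longrightarrow> wf_tup d (m * n) X \<longrightarrow>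
           col_norm d (m * n) (tup_diff X (kron_id d m n Y)) < r \<longrightarrow>
           (m * n, X) \<in> \<Omega> \<and>
           (\<forall>P < m * n. \<forall>Q < m * n.
              (\<lambda>l. tt_term d n fhat Y m X l P Q) sums f (m * n) X P Q)"
    using assms(6) by blast
  obtain U B where U: "openin (uniform_top d) U" "(n, Y) \<in> U"
    and B: "\<And>s X. (s, X) \<in> U \<inter> \<Omega> \<Longrightarrow> op_norm s (f s X) \<le> B"
    using assms(4,5) unfolding uniformly_analytic_def by blast
  have "generate_topology_on {uball d t Z r | t Z r. 1 \<le> t \<and> wf_tup d t Z \<and> 0 < r} U"
    using U(1) unfolding uniform_top_def openin_topology_generated_by_iff .
  then obtain e where e0: "e > 0" and eU: "uball d n Y e \<subseteq> U"
    using uball_nbhd U(2) by blast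
  define \<delta> where "\<delta> = min r e / 2"
  have d0: "\<delta> > 0" "\<delta> < r" "\<delta> < e" unfolding \<delta>_def using r0 e0 by auto
  define V where "V = {(i, j, k). i < n \<and> j < n \<and> k < d}"
  have bound: "cmod (fab fhat a b \<nu>) \<le> B / \<delta> ^ length \<nu>" if V\<nu>: "set \<nu> \<subseteq> V" for \<nu>
  proof -
    define m where "m = Suc (length \<nu>)"
    define c where "c = complex_of_real \<delta>"
    define X where "X = (\<lambda>k I J. kron_id d m n Y k I J + c * tZ d n \<nu> a k I J)"
    define P where "P = hd (tal \<nu> a)"
    define Q where "Q = length \<nu> * n + b"
    have V': "set \<nu> \<subseteq> {(i, j, k). i < n \<and> j < n \<and> k < d}" using V\<nu> unfolding V_def .
    have wf: "wf_tup d (m * n) X" unfolding wf_tup_def X_def kron_id_def tZ_def m_def by auto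
    have diff: "tup_diff X (kron_id d m n Y) = (\<lambda>k I J. c * tZ d n \<nu> a k I J)"
      unfolding tup_diff_def X_def by simp
    have cn: "col_norm d (m * n) (tup_diff X (kron_id d m n Y)) \<le> \<delta>"
    proof -
      have "col_norm d (m * n) (\<lambda>k I J. c * tZ d n \<nu> a k I J) \<le> cmod c"
        unfolding m_def by (rule tZ_norm[OF V' an])
      then show ?thesis unfolding diff c_def using d0 by simp
    qed
    have m1: "1 \<le> m" unfolding m_def by simp
    from hr m1 wf cn d0 have inO: "(m * n, X) \<in> \<Omega>"
      and sm: "\<forall>P < m * n. \<forall>Q < m * n. (\<lambda>l. tt_term d n fhat Y m X l P Q) sums f (m * n) X P Q"
      by (meson le_less_trans)+
    have Pn: "P < m * n" using hd_tal(1)[OF V' an] unfolding P_def m_def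
      by (metis lt_block zero_less_Suc add_0 mult_0)
    have Qn: "Q < m * n" unfolding Q_def m_def using lt_block[of "length \<nu>" "Suc (length \<nu>)" b n] bn by simp
    have tt: "(\<lambda>l. tt_term d n fhat Y m X l P Q) = (\<lambda>l. if l = length \<nu> then c ^ length \<nu> * fab fhat a b \<nu> else 0)"
      using tt_eval[OF V' an bn] unfolding X_def m_def P_def Q_def by simp
    have "(\<lambda>l. tt_term d n fhat Y m X l P Q) sums (c ^ length \<nu> * fab fhat a b \<nu>)"
      unfolding tt using sums_single[of "length \<nu>" "\<lambda>_. c ^ length \<nu> * fab fhat a b \<nu>"] by simp
    then have fv: "f (m * n) X P Q = c ^ length \<nu> * fab fhat a b \<nu>"
      using sm Pn Qn sums_unique2 by blast
    have "(m * n, X) \<in> uball d n Y e" unfolding uball_def using m1 wf cn d0 by auto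
    then have "(m * n, X) \<in> U \<inter> \<Omega>" using eU inO by auto
    then have "op_norm (m * n) (f (m * n) X) \<le> B" by (rule B)
    then have "cmod (f (m * n) X P Q) \<le> B" using entry_le_op_norm[OF Pn Qn, of "f (m * n) X"] by linarith
    then have "\<delta> ^ length \<nu> * cmod (fab fhat a b \<nu>) \<le> B" unfolding fv c_def
      using d0 by (simp add: norm_mult norm_power)
    then show ?thesis using d0 by (simp add: field_simps)
  qed
  have "fps_radius V (fab fhat a b) > 0"
  proof (rule radius_pos[OF _ _ d0(1)])
    have "V = {..<n} \<times> {..<n} \<times> {..<d}" unfolding V_def by auto
    then show "finite V" by simp
    have "(0, 0, 0) \<in> V" unfolding V_def using assms(1,2) by auto
    then show "V \<noteq> {}" by blast
  qed (rule bound)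
  then show "fps_radius {(i, j, k). i < n \<and> j < n \<and> k < d} (fab fhat a b) > 0" unfolding V_def .
qed


end
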